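(* Let $A$ be a nilpotent non-abelian finite-dimensional Leibniz algebra over a field whose center $Z_1(A)=\{z\in A: zA=Az=0\}$ is one-dimensional. Then there is no nilpotent Leibniz algebra $N$ and integer $i\ge 2$ with $A=N^i$.
   Context: A (left) Leibniz algebra is an algebra satisfying $x(yz)=(xy)z+y(xz)$ for all $x,y,z$. The lower central series of $N$ is $N^1=N$, $N^{j+1}=NN^j$; $N$ is nilpotent if $N^t=0$ for some $t$. $A$ is abelian if $AA=0$. *)

theory Defs
  imports Complex_Main
begin

definition leibniz_algebra ::
  "('k::field \<Rightarrow> 'v::ab_group_add \<Rightarrow> 'v) \<Rightarrow> ('v \<Rightarrow> 'v \<Rightarrow> 'v) \<Rightarrow> bool" where
  "leibniz_algebra sc mu \<longleftrightarrow>
     Vector_Spaces.vector_space sc \<and>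
     (\<forall>x y z. mu (x + y) z = mu x z + mu y z) \<and>
     (\<forall>x y z. mu x (y + z) = mu x y + mu x z) \<and>
     (\<forall>c x y. mu (sc c x) y = sc c (mu x y)) \<and>
     (\<forall>c x y. mu x (sc c y) = sc c (mu x y)) \<and>
     (\<forall>x y z. mu x (mu y z) = mu (mu x y) z + mu y (mu x z))"

definition subspace_prod ::
  "('k::field \<Rightarrow> 'v::ab_group_add \<Rightarrow> 'v) \<Rightarrow> ('v \<Rightarrow> 'v \<Rightarrow> 'v) \<Rightarrow> 'v set \<Rightarrow> 'v set \<Rightarrow> 'v set" where
  "subspace_prod sc mu U V = module.span sc {mu u v | u v. u \<in> U \<and> v \<in> V}"

text \<open>lcs_aux n = N^(n+1).\<close>
primrec lcs_aux ::
  "('k::field \<Rightarrow> 'v::ab_group_add \<Rightarrow> 'v) \<Rightarrow> ('v \<Rightarrow> 'v \<Rightarrow> 'v) \<Rightarrow> nat \<Rightarrow> 'v set" where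
  "lcs_aux sc mu 0 = UNIV"
| "lcs_aux sc mu (Suc n) = subspace_prod sc mu UNIV (lcs_aux sc mu n)"

definition lcs ::
  "('k::field \<Rightarrow> 'v::ab_group_add \<Rightarrow> 'v) \<Rightarrow> ('v \<Rightarrow> 'v \<Rightarrow> 'v) \<Rightarrow> nat \<Rightarrow> 'v set" where
  "lcs sc mu j = lcs_aux sc mu (j - 1)"

definition nilpotent_alg ::
  "('k::field \<Rightarrow> 'v::ab_group_add \<Rightarrow> 'v) \<Rightarrow> ('v \<Rightarrow> 'v \<Rightarrow> 'v) \<Rightarrow> bool" where
  "nilpotent_alg sc mu \<longleftrightarrow> (\<exists>t\<ge>1. lcs sc mu t = {0})"

definition abelian_alg :: "('v::ab_group_add \<Rightarrow> 'v \<Rightarrow> 'v) \<Rightarrow> bool" where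
  "abelian_alg mu \<longleftrightarrow> (\<forall>x y. mu x y = 0)"

definition alg_center :: "('v::ab_group_add \<Rightarrow> 'v \<Rightarrow> 'v) \<Rightarrow> 'v set" where
  "alg_center mu = {z. \<forall>a. mu z a = 0 \<and> mu a z = 0}"

definition fin_dim ::
  "('k::field \<Rightarrow> 'v::ab_group_add \<Rightarrow> 'v) \<Rightarrow> bool" where
  "fin_dim sc \<longleftrightarrow> (\<exists>B. finite B \<and> module.span sc B = UNIV)"

end

theory Submission
  imports Defs
begin

locale leib =
  fixes sc :: "'k::field \<Rightarrow> 'v::ab_group_add \<Rightarrow> 'v" and mu :: "'v \<Rightarrow> 'v \<Rightarrow> 'v"
  assumes LA: "leibniz_algebra sc mu"
begin

sublocale vector_space sc using LA unfolding leibniz_algebra_def by blast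

lemma addL: "mu (x + y) z = mu x z + mu y z" using LA unfolding leibniz_algebra_def by blast
lemma addR: "mu x (y + z) = mu x y + mu x z" using LA unfolding leibniz_algebra_def by blast
lemma scL: "mu (sc c x) y = sc c (mu x y)" using LA unfolding leibniz_algebra_def by blast
lemma scR: "mu x (sc c y) = sc c (mu x y)" using LA unfolding leibniz_algebra_def by blast
lemma leib: "mu x (mu y z) = mu (mu x y) z + mu y (mu x z)" using LA unfolding leibniz_algebra_def by blast

lemma zeroL: "mu 0 y = 0" using addL[of 0 0 y] by simp
lemma zeroR: "mu y 0 = 0" using addR[of y 0 0] by simp

abbreviation Lc where "Lc n \<equiv> lcs_aux sc mu n"

lemma Lsub: "subspace (Lc n)"
  by (cases n) (auto simp: subspace_prod_def)

lemma Lstep: "Lc (Suc n) \<subseteq> Lc n"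
proof (induction n)
  case 0 then show ?case by simp
next
  case (Suc n)
  have "{mu u v | u v. u \<in> UNIV \<and> v \<in> Lc (Suc n)} \<subseteq> {mu u v | u v. u \<in> UNIV \<and> v \<in> Lc n}"
    using Suc by blast
  then show ?case by (simp add: subspace_prod_def span_mono)
qed

lemma Lanti: "m \<le> n \<Longrightarrow> Lc n \<subseteq> Lc m"
  using lift_Suc_antimono_le[of Lc, OF Lstep] by blast

lemma Lgen: "y \<in> Lc b \<Longrightarrow> mu x y \<in> Lc (Suc b)"
  by (auto simp: subspace_prod_def intro!: span_base)

lemma Lprod: "x \<in> Lc a \<Longrightarrow> y \<in> Lc b \<Longrightarrow> mu x y \<in> Lc (a + b + 1)"
proof (induction a arbitrary: x y b)
  case 0 then show ?case using Lgen by simp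
next
  case (Suc a)
  have "x \<in> span {mu p q | p q. p \<in> UNIV \<and> q \<in> Lc a}"
    using Suc.prems(1) by (simp add: subspace_prod_def)
  then have "\<forall>b y. y \<in> Lc b \<longrightarrow> mu x y \<in> Lc (Suc a + b + 1)"
  proof (induction rule: span_induct_alt)
    case base then show ?case by (intro allI impI) (simp only: zeroL, rule subspace_0[OF Lsub])
  next
    case (step c g w)
    show ?case
    proof (intro allI impI)
      fix b y assume y: "y \<in> Lc b"
      from step.hyps(1) obtain p q where g: "g = mu p q" and q: "q \<in> Lc a" by blast
      have eq: "mu g y = mu p (mu q y) - mu q (mu p y)"
        using leib[of p q y] g by (simp add: algebra_simps)
      have m1: "mu p (mu q y) \<in> Lc (Suc a + b + 1)"
        using Lgen[OF Suc.IH[OF q y]] by simp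
      have m2: "mu q (mu p y) \<in> Lc (Suc a + b + 1)"
        using Suc.IH[OF q Lgen[OF y, of p]] by simp
      have "mu g y \<in> Lc (Suc a + b + 1)"
        unfolding eq by (rule subspace_diff[OF Lsub m1 m2])
      then show "mu (sc c g + w) y \<in> Lc (Suc a + b + 1)"
      proof -
        have w1: "mu w y \<in> Lc (Suc a + b + 1)" using step.IH y by blast
        have w2: "sc c (mu g y) \<in> Lc (Suc a + b + 1)"
          using \<open>mu g y \<in> Lc (Suc a + b + 1)\<close> by (rule subspace_scale[OF Lsub])
        have e2: "mu (sc c g + w) y = sc c (mu g y) + mu w y" by (simp add: addL scL)
        show ?thesis unfolding e2 by (rule subspace_add[OF Lsub w2 w1])
      qed
    qed
  qed
  then show ?case using Suc.prems(2) by blast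
qed

end

theorem mainTheorem15:
  fixes scaleA :: "'k::field \<Rightarrow> 'a::ab_group_add \<Rightarrow> 'a"
    and multA :: "'a \<Rightarrow> 'a \<Rightarrow> 'a"
    and scaleN :: "'k \<Rightarrow> 'n::ab_group_add \<Rightarrow> 'n"
    and multN :: "'n \<Rightarrow> 'n \<Rightarrow> 'n"
    and i :: nat
  assumes "leibniz_algebra scaleA multA"
    and "fin_dim scaleA"
    and "nilpotent_alg scaleA multA"
    and "\<not> abelian_alg multA"
    and "vector_space.dim scaleA (alg_center multA) = 1"
    and "leibniz_algebra scaleN multN"
    and "nilpotent_alg scaleN multN"
    and "i \<ge> 2"
  shows "\<not> (\<exists>f. Vector_Spaces.linear scaleA scaleN f
              \<and> bij_betw f UNIV (lcs scaleN multN i)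
              \<and> (\<forall>x y. f (multA x y) = multN (f x) (f y)))"
proof
  interpret A: leib scaleA multA by (rule leib.intro) fact
  interpret N: leib scaleN multN by (rule leib.intro) fact
  assume "\<exists>f. Vector_Spaces.linear scaleA scaleN f
              \<and> bij_betw f UNIV (lcs scaleN multN i)
              \<and> (\<forall>x y. f (multA x y) = multN (f x) (f y))"
  then obtain f where lin: "Vector_Spaces.linear scaleA scaleN f"
    and bij: "bij_betw f UNIV (lcs scaleN multN i)"
    and hom: "\<And>x y. f (multA x y) = multN (f x) (f y)" by blast
  have mh: "module_hom scaleA scaleN f" using lin by (simp add: linear_iff_module_hom)
  have f0: "f 0 = 0" using module_hom.zero[OF mh] .
  have fsc: "\<And>c x. f (scaleA c x) = scaleN c (f x)" using module_hom.scale[OF mh] .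
  have inj: "inj f" and img: "range f = lcs scaleN multN i" using bij by (auto simp: bij_betw_def)
  have fz: "\<And>x. f x = 0 \<Longrightarrow> x = 0" using inj f0 by (metis injD)
  define P where "P = i - 1"
  have P1: "P \<ge> 1" using assms(8) by (simp add: P_def)
  have Li: "lcs scaleN multN i = N.Lc P" by (simp add: lcs_def P_def)
  obtain x y where xy: "multA x y \<noteq> 0" using assms(4) by (auto simp: abelian_alg_def)
  have nz: "f (multA x y) \<noteq> 0" using fz xy by blast
  have fin: "f w \<in> N.Lc P" for w using img Li by blast
  obtain t where "t \<ge> 1" "N.Lc (t - 1) = {0}" using assms(7)
    unfolding nilpotent_alg_def lcs_def by blast
  then have ex: "\<exists>m. N.Lc m = {0}" by blast
  define m0 where "m0 = (LEAST m. N.Lc m = {0})"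
  have m0: "N.Lc m0 = {0}" unfolding m0_def using LeastI_ex[OF ex] .
  have m0P: "m0 > P"
  proof (rule ccontr)
    assume "\<not> P < m0"
    then have "N.Lc P \<subseteq> N.Lc m0" using N.Lanti by simp
    then show False using fin[of "multA x y"] nz m0 by blast
  qed
  then obtain K where K: "m0 = Suc K" and KP: "K \<ge> P" by (cases m0) auto
  have LK: "N.Lc K \<noteq> {0}"
  proof -
    have "K < m0" using K by simp
    then show ?thesis unfolding m0_def by (rule not_less_Least)
  qed
  have LSK: "N.Lc (Suc K) = {0}" using m0 unfolding K .
  show False
  proof (cases "K = P")
    case True
    have "multA a b = 0" for a b
    proof -
      have "multN (f a) (f b) \<in> N.Lc (P + P + 1)" using N.Lprod fin by blast
      also have "\<dots> \<subseteq> N.Lc (Suc K)" using True P1 by (intro N.Lanti) simp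
      finally have "multN (f a) (f b) = 0" using LSK by blast
      then show ?thesis using hom fz by metis
    qed
    then show False using xy by blast
  next
    case False
    then obtain J where J: "K = Suc J" and JP: "J \<ge> P" using KP by (cases K) auto
    have cent: "multN z (f w) = 0 \<and> multN (f w) z = 0" if z: "z \<in> N.Lc J" for z w
    proof -
      have s: "N.Lc (J + P + 1) \<subseteq> N.Lc (Suc K)" "N.Lc (P + J + 1) \<subseteq> N.Lc (Suc K)"
        by (rule N.Lanti, use J P1 in simp)+
      show ?thesis using N.Lprod[OF z fin[of w]] N.Lprod[OF fin[of w] z] s LSK by blast
    qed
    have ne: "N.Lc K \<noteq> N.Lc J"
    proof
      assume eq: "N.Lc K = N.Lc J"
      have "N.Lc (Suc K) = N.Lc K" using J eq by simp
      then show False using LSK LK by simp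
    qed
    have sub: "N.Lc K \<subseteq> N.Lc J" using J N.Lstep by simp
    obtain v where v: "v \<in> N.Lc J" "v \<notin> N.Lc K" using ne sub by blast
    obtain u where u: "u \<in> N.Lc K" "u \<noteq> 0" using LK N.subspace_0[OF N.Lsub] by blast
    have uP: "u \<in> N.Lc P" "v \<in> N.Lc P" using u(1) sub v(1) N.Lanti[OF JP] by auto
    obtain a where a: "f a = u" using uP img Li by (metis imageE)
    obtain b where b: "f b = v" using uP img Li by (metis imageE)
    have inC: "w \<in> alg_center multA" if "f w \<in> N.Lc J" for w
    proof -
      have "multA w c = 0 \<and> multA c w = 0" for c
        using cent[OF that, of c] hom fz by metis
      then show ?thesis by (simp add: alg_center_def)
    qed
    have aC: "a \<in> alg_center multA" using inC a u(1) sub by blast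
    have bC: "b \<in> alg_center multA" using inC b v(1) by blast
    obtain B where B: "B \<subseteq> alg_center multA" "alg_center multA \<subseteq> A.span B" "card B = 1"
      using A.basis_exists[of "alg_center multA"] assms(5) by metis
    then obtain c where Bc: "B = {c}" by (meson card_1_singletonE)
    obtain s where s: "a = scaleA s c" using aC B(2) Bc A.span_singleton by blast
    obtain r where r: "b = scaleA r c" using bC B(2) Bc A.span_singleton by blast
    have s0: "s \<noteq> 0" using s a u(2) f0 by auto
    have "b = scaleA (r / s) a" using s r s0 by (simp add: A.scale_scale)
    then have "v = scaleN (r / s) u" using a b fsc by simp
    then have "v \<in> N.Lc K" using N.subspace_scale[OF N.Lsub u(1), of "r / s"] by (simp only:)
    then show False using v(2) by simp
  qed
qed

end
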